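(* For any integer $p\ge2$ and any partition $\lambda$ with $p$-core $\bar\lambda$, the ratio $H_{\text{non-}p\text{-fold}}(\lambda)/H(\bar\lambda)$ is an integer.
   Context: For a partition $\lambda$, the hook length of a box of its Young diagram is the number of boxes to its right in its row plus the number below it in its column plus one; $H(\lambda)$ is the product of all hook lengths and $H_{\text{non-}p\text{-fold}}(\lambda)$ the product of the hook lengths not divisible by $p$. A border strip of size $p$ is a connected skew Young diagram with $p$ boxes containing no $2\times2$ square; the $p$-core $\bar\lambda$ is the partition obtained from $\lambda$ by repeatedly removing border strips of size $p$ (keeping a Young diagram after each removal) until no removal is possible; it is independent of the choices. *)

theory Defs
  imports Main
begin

definition is_partition :: "nat list \<Rightarrow> bool" where
  "is_partition la \<longleftrightarrow> sorted_wrt (\<ge>) la \<and> (\<forall>x\<in>set la. 0 < x)"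

definition cells :: "nat list \<Rightarrow> (nat \<times> nat) set" where
  "cells la = {(i, j). i < length la \<and> j < la ! i}"

definition hook :: "nat list \<Rightarrow> nat \<times> nat \<Rightarrow> nat" where
  "hook la c = (case c of (i, j) \<Rightarrow>
     card {j'. j < j' \<and> (i, j') \<in> cells la} + card {i'. i < i' \<and> (i', j) \<in> cells la} + 1)"

definition hook_prod :: "nat list \<Rightarrow> nat" where
  "hook_prod la = (\<Prod>c\<in>cells la. hook la c)"

definition hook_prod_non_pfold :: "nat \<Rightarrow> nat list \<Rightarrow> nat" where
  "hook_prod_non_pfold p la = (\<Prod>c\<in>{c \<in> cells la. \<not> p dvd hook la c}. hook la c)"

definition adjacent :: "nat \<times> nat \<Rightarrow> nat \<times> nat \<Rightarrow> bool" where
  "adjacent c d \<longleftrightarrow> (case (c, d) of ((i, j), (i', j')) \<Rightarrow>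
     (i = i' \<and> (j' = Suc j \<or> j = Suc j')) \<or> (j = j' \<and> (i' = Suc i \<or> i = Suc i')))"

definition cells_connected :: "(nat \<times> nat) set \<Rightarrow> bool" where
  "cells_connected S \<longleftrightarrow> S \<noteq> {} \<and>
     (\<forall>c\<in>S. \<forall>d\<in>S. (\<lambda>x y. x \<in> S \<and> y \<in> S \<and> adjacent x y)\<^sup>*\<^sup>* c d)"

definition no_2x2 :: "(nat \<times> nat) set \<Rightarrow> bool" where
  "no_2x2 S \<longleftrightarrow> \<not> (\<exists>i j. (i, j) \<in> S \<and> (Suc i, j) \<in> S \<and> (i, Suc j) \<in> S \<and> (Suc i, Suc j) \<in> S)"

definition remove_strip :: "nat \<Rightarrow> nat list \<Rightarrow> nat list \<Rightarrow> bool" where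
  "remove_strip p la mu \<longleftrightarrow> is_partition mu \<and> cells mu \<subseteq> cells la \<and>
     card (cells la - cells mu) = p \<and> cells_connected (cells la - cells mu) \<and>
     no_2x2 (cells la - cells mu)"

definition is_p_core :: "nat \<Rightarrow> nat list \<Rightarrow> nat list \<Rightarrow> bool" where
  "is_p_core p la mu \<longleftrightarrow> (remove_strip p)\<^sup>*\<^sup>* la mu \<and> \<not> (\<exists>nu. remove_strip p mu nu)"

end

theory Submission
  imports Defs
begin


definition dclosed :: "nat \<Rightarrow> nat set \<Rightarrow> bool" where
  "dclosed p Y \<longleftrightarrow> (\<forall>y\<in>Y. p \<le> y \<longrightarrow> y - p \<in> Y)"

lemma dclosed_mod:
  assumes "dclosed p Y" "y \<in> Y" "z \<le> y" "z mod p = y mod p"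
  shows "z \<in> Y"
  using assms(2-4)
proof (induction y rule: less_induct)
  case (less y)
  show ?case
  proof (cases "z = y")
    case True then show ?thesis using less by simp
  next
    case False
    hence zy: "z < y" using less by simp
    have "p dvd y - z" using less(3,4) by (metis mod_eq_dvd_iff_nat)
    moreover have "p > 0"
    proof (rule ccontr)
      assume "\<not> p > 0" hence "p = 0" by simp
      thus False using less(4) zy by simp
    qed
    ultimately have "p \<le> y - z" using zy by (simp add: dvd_imp_le)
    hence py: "p \<le> y" "z \<le> y - p" using zy by linarith+
    have "y - p \<in> Y" using assms(1) less(2) py(1) unfolding dclosed_def by blast
    moreover have "z mod p = (y - p) mod p" using less(4) py(1)
      by (metis le_add_diff_inverse2 mod_add_self2)
    moreover have "y - p < y" using \<open>p > 0\<close> py(1) by simp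
    ultimately show ?thesis using less.IH py(2) by blast
  qed
qed

lemma card_mod_group:
  fixes A :: "nat set"
  assumes "finite A" "p > 0"
  shows "card {x\<in>A. P (x mod p)} = (\<Sum>s<p. if P s then card {x\<in>A. x mod p = s} else 0)"
proof -
  have "card {x\<in>A. P (x mod p)} = (\<Sum>x\<in>{x\<in>A. P (x mod p)}. (1::nat))" by simp
  also have "\<dots> = (\<Sum>s<p. \<Sum>x\<in>{x \<in> {x\<in>A. P (x mod p)}. x mod p = s}. (1::nat))"
    by (rule sum.group[symmetric]) (use assms in \<open>auto simp: mod_less_divisor\<close>)
  also have "\<dots> = (\<Sum>s<p. if P s then card {x\<in>A. x mod p = s} else 0)"
  proof (rule sum.cong)
    fix s assume "s \<in> {..<p}"
    show "(\<Sum>x\<in>{x \<in> {x\<in>A. P (x mod p)}. x mod p = s}. (1::nat)) = (if P s then card {x\<in>A. x mod p = s} else 0)"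
    proof (cases "P s")
      case True
      hence "{x \<in> {x\<in>A. P (x mod p)}. x mod p = s} = {x\<in>A. x mod p = s}" by auto
      then show ?thesis using True by simp
    next
      case False
      have e: "{x \<in> {x\<in>A. P (x mod p)}. x mod p = s} = {}" using False by blast
      show ?thesis unfolding e using False by simp
    qed
  qed simp
  finally show ?thesis .
qed

lemma card_mod_transfer:
  fixes X Y :: "nat set"
  assumes "finite X" "finite Y" "p > 0"
    and "\<And>s. card {x\<in>X. x mod p = s} = card {y\<in>Y. y mod p = s}"
  shows "card {x\<in>X. P (x mod p)} = card {y\<in>Y. P (y mod p)}"
  by (simp only: card_mod_group[OF assms(1,3)] card_mod_group[OF assms(2,3)] assms(4))

lemma mod_add_cancel_nat:
  assumes "((a::nat) + h) mod p = (b + h) mod p"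
  shows "a mod p = b mod p"
proof (cases "a \<le> b")
  case True
  have "p dvd (b + h) - (a + h)" using mod_eq_dvd_iff_nat[of "a+h" "b+h" p] assms True by simp
  hence "p dvd b - a" by simp
  thus ?thesis using mod_eq_dvd_iff_nat[of a b p] True by simp
next
  case False
  have "p dvd (a + h) - (b + h)" using mod_eq_dvd_iff_nat[of "b+h" "a+h" p] assms False by simp
  hence "p dvd a - b" by simp
  thus ?thesis using mod_eq_dvd_iff_nat[of b a p] False by simp
qed

definition mult :: "nat set \<Rightarrow> nat \<Rightarrow> nat" where
  "mult Z h = card {z\<in>Z. h \<le> z \<and> z - h \<notin> Z}"

definition multc :: "nat \<Rightarrow> nat set \<Rightarrow> nat \<Rightarrow> nat \<Rightarrow> nat" where
  "multc p Z h r = card {z\<in>Z. z mod p = r \<and> h \<le> z \<and> z - h \<notin> Z}"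

lemma mult_sum:
  fixes Z :: "nat set"
  assumes "finite Z" "p > 0"
  shows "mult Z h = (\<Sum>r<p. multc p Z h r)"
proof -
  have "mult Z h = (\<Sum>x\<in>{z\<in>Z. h \<le> z \<and> z - h \<notin> Z}. (1::nat))" unfolding mult_def by simp
  also have "\<dots> = (\<Sum>r<p. \<Sum>x\<in>{x \<in> {z\<in>Z. h \<le> z \<and> z - h \<notin> Z}. x mod p = r}. (1::nat))"
    by (rule sum.group[symmetric]) (use assms in \<open>auto simp: mod_less_divisor\<close>)
  also have "\<dots> = (\<Sum>r<p. multc p Z h r)"
    by (rule sum.cong) (auto simp: multc_def intro!: arg_cong[where f=card])
  finally show ?thesis .
qed

lemma multc_split:
  fixes Z :: "nat set"
  assumes "finite Z"
  shows "multc p Z h r = card {z\<in>Z. z mod p = r \<and> h \<le> z} - card {z\<in>Z. z mod p = r \<and> h \<le> z \<and> z - h \<in> Z}"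
proof -
  have "{z\<in>Z. z mod p = r \<and> h \<le> z \<and> z - h \<notin> Z} =
     {z\<in>Z. z mod p = r \<and> h \<le> z} - {z\<in>Z. z mod p = r \<and> h \<le> z \<and> z - h \<in> Z}" by auto
  moreover have "finite {z\<in>Z. z mod p = r \<and> h \<le> z \<and> z - h \<in> Z}" using assms by simp
  moreover have "{z\<in>Z. z mod p = r \<and> h \<le> z \<and> z - h \<in> Z} \<subseteq> {z\<in>Z. z mod p = r \<and> h \<le> z}" by auto
  ultimately show ?thesis unfolding multc_def by (simp only: card_Diff_subset)
qed

lemma B_le:
  fixes Z :: "nat set"
  assumes "finite Z"
  shows "card {z\<in>Z. z mod p = r \<and> h \<le> z \<and> z - h \<in> Z} \<le> card {w\<in>Z. (w + h) mod p = r}"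
proof -
  have "inj_on (\<lambda>z. z - h) {z\<in>Z. z mod p = r \<and> h \<le> z \<and> z - h \<in> Z}"
    by (auto simp: inj_on_def)
  moreover have "(\<lambda>z. z - h) ` {z\<in>Z. z mod p = r \<and> h \<le> z \<and> z - h \<in> Z} \<subseteq> {w\<in>Z. (w + h) mod p = r}"
    by auto
  moreover have "finite {w\<in>Z. (w + h) mod p = r}" using assms by simp
  ultimately show ?thesis by (rule card_inj_on_le)
qed

lemma A_ge:
  fixes Z :: "nat set"
  assumes "finite Z"
  shows "card {z\<in>Z. z mod p = r} - card {z. z mod p = r \<and> z < h} \<le> card {z\<in>Z. z mod p = r \<and> h \<le> z}"
proof -
  have eq: "{z\<in>Z. z mod p = r} = {z\<in>Z. z mod p = r \<and> h \<le> z} \<union> {z\<in>Z. z mod p = r \<and> z < h}" by auto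
  have "card {z\<in>Z. z mod p = r} \<le> card {z\<in>Z. z mod p = r \<and> h \<le> z} + card {z\<in>Z. z mod p = r \<and> z < h}"
    unfolding eq by (rule card_Un_le)
  moreover have "card {z\<in>Z. z mod p = r \<and> z < h} \<le> card {z. z mod p = r \<and> z < h}"
    by (rule card_mono) auto
  ultimately show ?thesis by linarith
qed

lemma multc_mono:
  fixes X Y :: "nat set"
  assumes "finite X" "finite Y" "p > 0" "dclosed p Y"
    and cnt: "\<And>s. card {x\<in>X. x mod p = s} = card {y\<in>Y. y mod p = s}"
  shows "multc p Y h r \<le> multc p X h r"
proof (cases "multc p Y h r = 0")
  case True then show ?thesis by simp
next
  case False
  hence "{z\<in>Y. z mod p = r \<and> h \<le> z \<and> z - h \<notin> Y} \<noteq> {}"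
    unfolding multc_def by (metis card.empty)
  then obtain y where y: "y \<in> Y" "y mod p = r" "h \<le> y" "y - h \<notin> Y" by blast
  have low: "{z. z mod p = r \<and> z < h} \<subseteq> Y"
  proof
    fix z assume "z \<in> {z. z mod p = r \<and> z < h}"
    thus "z \<in> Y" using dclosed_mod[OF assms(4) y(1)] y(2,3) by auto
  qed
  have AY: "card {z\<in>Y. z mod p = r \<and> h \<le> z} = card {z\<in>Y. z mod p = r} - card {z. z mod p = r \<and> z < h}"
  proof -
    have eq: "{z\<in>Y. z mod p = r} = {z\<in>Y. z mod p = r \<and> h \<le> z} \<union> {z. z mod p = r \<and> z < h}"
      using low by auto
    have fin: "finite {z. z mod p = r \<and> z < h}" by simp
    have "card {z\<in>Y. z mod p = r} = card {z\<in>Y. z mod p = r \<and> h \<le> z} + card {z. z mod p = r \<and> z < h}"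
      unfolding eq by (rule card_Un_disjoint) (use assms(2) fin in auto)
    thus ?thesis by simp
  qed
  have BY: "card {w\<in>Y. (w + h) mod p = r} \<le> card {z\<in>Y. z mod p = r \<and> h \<le> z \<and> z - h \<in> Y}"
  proof -
    have "{w\<in>Y. (w + h) mod p = r} \<subseteq> (\<lambda>z. z - h) ` {z\<in>Y. z mod p = r \<and> h \<le> z \<and> z - h \<in> Y}"
    proof
      fix w assume w: "w \<in> {w\<in>Y. (w + h) mod p = r}"
      have "w < y - h"
      proof (rule ccontr)
        assume "\<not> w < y - h"
        hence "y - h \<le> w" by simp
        moreover have "(y - h) mod p = w mod p"
        proof (rule mod_add_cancel_nat[where h=h])
          show "(y - h + h) mod p = (w + h) mod p" using w y(2,3) by simp
        qed
        ultimately have "y - h \<in> Y" using dclosed_mod[OF assms(4)] w by blast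
        thus False using y(4) by simp
      qed
      hence "w + h \<in> Y" using dclosed_mod[OF assms(4) y(1), of "w + h"] w y(2) by auto
      thus "w \<in> (\<lambda>z. z - h) ` {z\<in>Y. z mod p = r \<and> h \<le> z \<and> z - h \<in> Y}"
        using w by (intro image_eqI[where x="w+h"]) auto
    qed
    hence "card {w\<in>Y. (w + h) mod p = r} \<le> card ((\<lambda>z. z - h) ` {z\<in>Y. z mod p = r \<and> h \<le> z \<and> z - h \<in> Y})"
      by (rule card_mono[rotated]) (use assms(2) in simp)
    also have "\<dots> \<le> card {z\<in>Y. z mod p = r \<and> h \<le> z \<and> z - h \<in> Y}"
      by (rule card_image_le) (use assms(2) in simp)
    finally show ?thesis .
  qed
  have tr: "card {w\<in>X. (w + h) mod p = r} = card {w\<in>Y. (w + h) mod p = r}"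
  proof -
    have "card {w\<in>X. (w mod p + h) mod p = r} = card {w\<in>Y. (w mod p + h) mod p = r}"
      by (rule card_mod_transfer[OF assms(1-3) cnt])
    thus ?thesis by (simp add: mod_add_left_eq)
  qed
  have "multc p Y h r = card {z\<in>Y. z mod p = r \<and> h \<le> z} - card {z\<in>Y. z mod p = r \<and> h \<le> z \<and> z - h \<in> Y}"
    by (rule multc_split[OF assms(2)])
  also have "\<dots> \<le> (card {z\<in>Y. z mod p = r} - card {z. z mod p = r \<and> z < h}) - card {w\<in>Y. (w + h) mod p = r}"
    using AY BY by linarith
  also have "\<dots> = (card {z\<in>X. z mod p = r} - card {z. z mod p = r \<and> z < h}) - card {w\<in>X. (w + h) mod p = r}"
    using cnt tr by simp
  also have "\<dots> \<le> card {z\<in>X. z mod p = r \<and> h \<le> z} - card {z\<in>X. z mod p = r \<and> h \<le> z \<and> z - h \<in> X}"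
    using A_ge[OF assms(1), of p r h] B_le[OF assms(1), of p r h] by linarith
  also have "\<dots> = multc p X h r" by (rule multc_split[OF assms(1), symmetric])
  finally show ?thesis .
qed

lemma mult_mono:
  fixes X Y :: "nat set"
  assumes "finite X" "finite Y" "p > 0" "dclosed p Y"
    and cnt: "\<And>s. card {x\<in>X. x mod p = s} = card {y\<in>Y. y mod p = s}"
  shows "mult Y h \<le> mult X h"
  unfolding mult_sum[OF assms(1,3)] mult_sum[OF assms(2,3)]
  by (rule sum_mono) (rule multc_mono[OF assms])

lemma mult_dvd_zero:
  assumes "dclosed p Y" "p dvd h"
  shows "mult Y h = 0"
proof -
  have "{z\<in>Y. h \<le> z \<and> z - h \<notin> Y} = {}"
  proof (rule ccontr)
    assume "{z\<in>Y. h \<le> z \<and> z - h \<notin> Y} \<noteq> {}"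
    then obtain z where z: "z \<in> Y" "h \<le> z" "z - h \<notin> Y" by blast
    have "(z - h) mod p = z mod p" using z(2) assms(2) mod_eq_dvd_iff_nat[of "z - h" z p] by simp
    thus False using dclosed_mod[OF assms(1) z(1), of "z - h"] z(3) by simp
  qed
  thus ?thesis unfolding mult_def by (simp only: card.empty)
qed



definition PX :: "(nat \<Rightarrow> bool) \<Rightarrow> nat set \<Rightarrow> (nat \<times> nat) set" where
  "PX Q X = {(b, c). b \<in> X \<and> c \<notin> X \<and> c < b \<and> Q (b - c)}"

lemma mem_PX: "(b, c) \<in> PX Q X \<longleftrightarrow> b \<in> X \<and> c \<notin> X \<and> c < b \<and> Q (b - c)"
  by (simp add: PX_def)

lemma prod_PX:
  assumes "finite Z" "\<forall>z\<in>Z. z \<le> M"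
  shows "(\<Prod>q\<in>PX Q Z. fst q - snd q) = (\<Prod>h\<in>{h. 0 < h \<and> h \<le> M \<and> Q h}. h ^ mult Z h)"
proof -
  have finP: "finite (PX Q Z)"
  proof (rule finite_subset)
    show "PX Q Z \<subseteq> Z \<times> {..M}"
    proof
      fix q assume "q \<in> PX Q Z"
      moreover obtain b c where q: "q = (b, c)" by fastforce
      ultimately have "b \<in> Z" "c < b" by (auto simp: mem_PX)
      thus "q \<in> Z \<times> {..M}" using assms(2) q by auto
    qed
  qed (use assms(1) in simp)
  have "(\<Prod>q\<in>PX Q Z. fst q - snd q) =
      (\<Prod>h\<in>{h. 0 < h \<and> h \<le> M \<and> Q h}. \<Prod>q\<in>{q \<in> PX Q Z. fst q - snd q = h}. fst q - snd q)"
  proof (rule prod.group[symmetric])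
    show "finite (PX Q Z)" by (rule finP)
    show "finite {h. 0 < h \<and> h \<le> M \<and> Q h}" by (rule finite_subset[of _ "{..M}"]) auto
    show "(\<lambda>q. fst q - snd q) ` PX Q Z \<subseteq> {h. 0 < h \<and> h \<le> M \<and> Q h}"
    proof
      fix x assume "x \<in> (\<lambda>q. fst q - snd q) ` PX Q Z"
      then obtain b c where "(b, c) \<in> PX Q Z" "x = b - c" by auto
      hence "b \<in> Z" "c < b" "Q (b - c)" "x = b - c" by (auto simp: mem_PX)
      moreover have "b \<le> M" using assms(2) \<open>b \<in> Z\<close> by simp
      ultimately show "x \<in> {h. 0 < h \<and> h \<le> M \<and> Q h}" by simp
    qed
  qed
  also have "\<dots> = (\<Prod>h\<in>{h. 0 < h \<and> h \<le> M \<and> Q h}. h ^ mult Z h)"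
  proof (rule prod.cong[OF refl])
    fix h assume h: "h \<in> {h. 0 < h \<and> h \<le> M \<and> Q h}"
    let ?S = "{q \<in> PX Q Z. fst q - snd q = h}"
    have "(\<Prod>q\<in>?S. fst q - snd q) = (\<Prod>q\<in>?S. h)"
      by (rule prod.cong[OF refl]) simp
    also have "\<dots> = h ^ card ?S" by simp
    also have "card ?S = mult Z h"
    proof -
      have "inj_on fst ?S"
      proof (rule inj_onI)
        fix q q' assume a: "q \<in> ?S" "q' \<in> ?S" "fst q = fst q'"
        obtain b c b' c' where q: "q = (b, c)" "q' = (b', c')" by fastforce
        have "c < b" "c' < b'" "b - c = h" "b' - c' = h" "b = b'" using a unfolding q by (auto simp: mem_PX)
        thus "q = q'" unfolding q by simp
      qed
      moreover have "fst ` ?S = {z\<in>Z. h \<le> z \<and> z - h \<notin> Z}"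
      proof
        show "fst ` ?S \<subseteq> {z\<in>Z. h \<le> z \<and> z - h \<notin> Z}"
        proof
          fix z assume "z \<in> fst ` ?S"
          then obtain b c where bc: "(b, c) \<in> ?S" "z = b" by force
          hence "b \<in> Z" "c \<notin> Z" "c < b" "b - c = h" by (auto simp: mem_PX)
          moreover have "c = b - h" using calculation by linarith
          ultimately show "z \<in> {z\<in>Z. h \<le> z \<and> z - h \<notin> Z}" using bc(2) by simp
        qed
        show "{z\<in>Z. h \<le> z \<and> z - h \<notin> Z} \<subseteq> fst ` ?S"
        proof
          fix z assume z: "z \<in> {z\<in>Z. h \<le> z \<and> z - h \<notin> Z}"
          have "(z, z - h) \<in> ?S"
            using z h by (auto simp: mem_PX)
          thus "z \<in> fst ` ?S" by (rule rev_image_eqI) simp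
        qed
      qed
      ultimately show ?thesis unfolding mult_def using card_image by fastforce
    qed
    finally show "(\<Prod>q\<in>?S. fst q - snd q) = h ^ mult Z h" .
  qed
  finally show ?thesis .
qed

definition pt :: "nat list \<Rightarrow> nat \<Rightarrow> nat" where
  "pt l i = (if i < length l then l ! i else 0)"

definition cellsf :: "(nat \<Rightarrow> nat) \<Rightarrow> (nat \<times> nat) set" where
  "cellsf f = {(i, j). j < f i}"

definition hookf :: "(nat \<Rightarrow> nat) \<Rightarrow> nat \<times> nat \<Rightarrow> nat" where
  "hookf f c = (case c of (i, j) \<Rightarrow>
     card {j'. j < j' \<and> (i, j') \<in> cellsf f} + card {i'. i < i' \<and> (i', j) \<in> cellsf f} + 1)"

definition good :: "(nat \<Rightarrow> nat) \<Rightarrow> nat \<Rightarrow> bool" where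
  "good f n \<longleftrightarrow> (\<forall>i j. i \<le> j \<longrightarrow> f j \<le> f i) \<and> (\<forall>i. n \<le> i \<longrightarrow> f i = 0)"

definition bt :: "(nat \<Rightarrow> nat) \<Rightarrow> nat \<Rightarrow> nat \<Rightarrow> nat" where
  "bt f n i = f i + n - Suc i"

definition BX :: "(nat \<Rightarrow> nat) \<Rightarrow> nat \<Rightarrow> nat set" where
  "BX f n = bt f n ` {..<n}"

definition Kf :: "(nat \<Rightarrow> nat) \<Rightarrow> nat \<Rightarrow> nat" where
  "Kf f j = card {i. j < f i}"

lemma cells_pt: "cells l = cellsf (pt l)"
  unfolding cells_def cellsf_def pt_def by (intro set_eqI) (simp split: prod.splits)

lemma hook_pt: "hook l = hookf (pt l)"
  unfolding hook_def hookf_def cells_pt by simp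

lemma good_pt: "is_partition l \<Longrightarrow> good (pt l) (length l)"
  unfolding good_def is_partition_def pt_def
  by (auto simp: sorted_wrt_iff_nth_less) (metis le_eq_less_or_eq)

lemma good_mono: "good f n \<Longrightarrow> n \<le> m \<Longrightarrow> good f m"
  unfolding good_def by auto

lemma downclosed_eq:
  assumes "finite (A::nat set)" "\<And>x y. x \<in> A \<Longrightarrow> y < x \<Longrightarrow> y \<in> A"
  shows "A = {..<card A}"
proof (cases "A = {}")
  case True then show ?thesis by simp
next
  case False
  define m where "m = Max A"
  have "A = {..m}"
  proof
    show "A \<subseteq> {..m}" using assms(1) m_def by auto
    show "{..m} \<subseteq> A"
    proof
      fix y assume "y \<in> {..m}"
      moreover have "m \<in> A" using assms(1) False m_def by simp
      ultimately show "y \<in> A" using assms(2) by (cases "y = m") auto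
    qed
  qed
  thus ?thesis using lessThan_Suc_atMost[of m] by simp
qed

lemma good_K:
  assumes "good f n"
  shows "{i. j < f i} = {..<Kf f j}" "Kf f j \<le> n"
proof -
  have fin: "finite {i. j < f i}"
    by (rule finite_subset[of _ "{..<n}"]) (use assms in \<open>auto simp: good_def not_less[symmetric]\<close>)
  show eq: "{i. j < f i} = {..<Kf f j}" unfolding Kf_def
    by (rule downclosed_eq[OF fin]) (use assms in \<open>auto simp: good_def intro: less_le_trans\<close>)
  have "{i. j < f i} \<subseteq> {..<n}" using assms by (auto simp: good_def not_less[symmetric])
  thus "Kf f j \<le> n" using eq by auto
qed

lemma hookf_eq:
  assumes "good f n" "j < f i"
  shows "hookf f (i, j) = (f i - Suc j) + (Kf f j - Suc i) + 1"
proof -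
  have "{j'. j < j' \<and> (i, j') \<in> cellsf f} = {Suc j..<f i}" unfolding cellsf_def by auto
  moreover have "{i'. i < i' \<and> (i', j) \<in> cellsf f} = {Suc i..<Kf f j}"
  proof -
    have k: "\<And>i'. (j < f i') = (i' < Kf f j)" using good_K(1)[OF assms(1), of j] by blast
    show ?thesis unfolding cellsf_def by (auto simp: k)
  qed
  ultimately show ?thesis unfolding hookf_def by simp
qed

lemma bt_strict:
  assumes "good f n" "i < i'" "i' < n"
  shows "bt f n i' < bt f n i"
proof -
  have "f i' \<le> f i" using assms(1,2) unfolding good_def by simp
  thus ?thesis using assms(2,3) unfolding bt_def by linarith
qed



lemma K_anti:
  assumes "good f n" "j \<le> j'"
  shows "Kf f j' \<le> Kf f j"
proof -
  have "{i. j' < f i} \<subseteq> {i. j < f i}" using assms(2) by auto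
  hence "{..<Kf f j'} \<subseteq> {..<Kf f j}" using good_K(1)[OF assms(1)] by metis
  thus ?thesis by simp
qed

lemma cell_facts:
  assumes "good f n" "j < f i"
  shows "i < Kf f j" "Kf f j \<le> n" "i < n"
    "bt f n i - (j + n - Kf f j) = hookf f (i, j)"
    "j + n - Kf f j < bt f n i"
    "j + n - Kf f j \<notin> BX f n"
proof -
  have k: "\<And>i'. (j < f i') = (i' < Kf f j)" using good_K(1)[OF assms(1), of j] by blast
  show ik: "i < Kf f j" using k assms(2) by simp
  show kn: "Kf f j \<le> n" by (rule good_K(2)[OF assms(1)])
  show "i < n" using ik kn by simp
  have h: "hookf f (i, j) = (f i - Suc j) + (Kf f j - Suc i) + 1" by (rule hookf_eq[OF assms])
  show "bt f n i - (j + n - Kf f j) = hookf f (i, j)"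
    unfolding h bt_def using ik kn assms(2) by linarith
  show "j + n - Kf f j < bt f n i"
    unfolding bt_def using ik kn assms(2) by linarith
  show "j + n - Kf f j \<notin> BX f n"
  proof
    assume "j + n - Kf f j \<in> BX f n"
    then obtain k' where k': "k' < n" "j + n - Kf f j = bt f n k'" unfolding BX_def by auto
    show False
    proof (cases "k' < Kf f j")
      case True
      hence "j < f k'" using k by simp
      thus False using k' True kn unfolding bt_def by linarith
    next
      case False
      hence "\<not> j < f k'" using k[of k'] by simp
      hence "f k' \<le> j" by simp
      thus False using k' False kn unfolding bt_def by linarith
    qed
  qed
qed

lemma hook_bij:
  assumes "good f n"
  shows "(\<Prod>c\<in>{c\<in>cellsf f. Q (hookf f c)}. hookf f c) = (\<Prod>q\<in>PX Q (BX f n). fst q - snd q)"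
proof -
  define \<phi> where "\<phi> c = (bt f n (fst c), snd c + n - Kf f (snd c))" for c
  let ?S = "{c\<in>cellsf f. Q (hookf f c)}"
  have hk: "hookf f c = fst (\<phi> c) - snd (\<phi> c)" if "c \<in> ?S" for c
  proof -
    obtain i j where c: "c = (i, j)" by fastforce
    have "j < f i" using that c by (simp add: cellsf_def)
    thus ?thesis using cell_facts(4)[OF assms] c \<phi>_def by simp
  qed
  have bij: "bij_betw \<phi> ?S (PX Q (BX f n))"
  proof (rule bij_betw_imageI)
    show "inj_on \<phi> ?S"
    proof (rule inj_onI)
      fix c c' assume a: "c \<in> ?S" "c' \<in> ?S" "\<phi> c = \<phi> c'"
      obtain i j i' j' where c: "c = (i, j)" "c' = (i', j')" by fastforce
      have ji: "j < f i" "j' < f i'" using a(1,2) c by (auto simp: cellsf_def)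
      have e1: "bt f n i = bt f n i'" and e2: "j + n - Kf f j = j' + n - Kf f j'"
        using a(3) c \<phi>_def by auto
      have "i = i'"
      proof (rule ccontr)
        assume "i \<noteq> i'"
        hence "i < i' \<or> i' < i" by auto
        thus False using bt_strict[OF assms] e1 cell_facts(3)[OF assms ji(1)] cell_facts(3)[OF assms ji(2)]
          by (metis less_irrefl)
      qed
      moreover have "j = j'"
      proof (rule ccontr)
        assume "j \<noteq> j'"
        hence "j < j' \<or> j' < j" by auto
        thus False
        proof
          assume "j < j'"
          hence "Kf f j' \<le> Kf f j" using K_anti[OF assms] by simp
          thus False using e2 \<open>j < j'\<close> good_K(2)[OF assms, of j] good_K(2)[OF assms, of j'] by linarith
        next
          assume "j' < j"
          hence "Kf f j \<le> Kf f j'" using K_anti[OF assms] by simp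
          thus False using e2 \<open>j' < j\<close> good_K(2)[OF assms, of j] good_K(2)[OF assms, of j'] by linarith
        qed
      qed
      ultimately show "c = c'" using c by simp
    qed
    show "\<phi> ` ?S = PX Q (BX f n)"
    proof
      show "\<phi> ` ?S \<subseteq> PX Q (BX f n)"
      proof
        fix q assume "q \<in> \<phi> ` ?S"
        then obtain c where c: "c \<in> ?S" "q = \<phi> c" by blast
        obtain i j where ij: "c = (i, j)" by fastforce
        have ji: "j < f i" using c(1) ij by (simp add: cellsf_def)
        have "bt f n i \<in> BX f n" using cell_facts(3)[OF assms ji] unfolding BX_def by simp
        moreover have "Q (hookf f c)" using c(1) by simp
        ultimately show "q \<in> PX Q (BX f n)"
          using c(2) ij cell_facts(4-6)[OF assms ji] \<phi>_def by (simp add: mem_PX)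
      qed
      show "PX Q (BX f n) \<subseteq> \<phi> ` ?S"
      proof
        fix q assume q: "q \<in> PX Q (BX f n)"
        obtain b c where bc: "q = (b, c)" by fastforce
        have bX: "b \<in> BX f n" and cX: "c \<notin> BX f n" and cb: "c < b" and Qh: "Q (b - c)"
          using q bc by (auto simp: mem_PX)
        obtain i where i: "i < n" "b = bt f n i" using bX unfolding BX_def by auto
        define A where "A = {i'. i' < n \<and> c < bt f n i'}"
        define k where "k = card A"
        have Aeq: "A = {..<k}" unfolding k_def
        proof (rule downclosed_eq)
          show "finite A" unfolding A_def by simp
          fix x y assume "x \<in> A" "y < x"
          thus "y \<in> A" unfolding A_def using bt_strict[OF assms, of y x] by auto
        qed
        have kA: "\<And>i'. (i' < k) = (i' < n \<and> c < bt f n i')" using Aeq unfolding A_def by blast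
        have kn: "k \<le> n" using kA by (metis le_less_linear less_irrefl)
        have ik: "i < k" using kA i cb by simp
        have nck: "n \<le> c + k"
        proof (cases "k < n")
          case True
          hence "\<not> c < bt f n k" using kA[of k] by simp
          moreover have "bt f n k \<noteq> c" using cX True unfolding BX_def by auto
          ultimately have "bt f n k < c" by simp
          thus ?thesis unfolding bt_def using True by linarith
        qed (use kn in simp)
        define j where "j = c + k - n"
        have Kj: "Kf f j = k"
        proof -
          have "{i'. j < f i'} = {..<k}"
          proof (intro set_eqI iffI)
            fix i' assume "i' \<in> {..<k}"
            hence i'k: "i' < k" by simp
            hence "k - 1 < n" "c < bt f n (k - 1)" using kA[of "k - 1"] by auto
            hence "j < f (k - 1)" unfolding j_def bt_def using i'k nck by linarith
            moreover have "f (k - 1) \<le> f i'" using assms i'k unfolding good_def by simp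
            ultimately show "i' \<in> {i'. j < f i'}" by simp
          next
            fix i' assume "i' \<in> {i'. j < f i'}"
            hence ji': "j < f i'" by simp
            show "i' \<in> {..<k}"
            proof (rule ccontr)
              assume "i' \<notin> {..<k}"
              hence "k \<le> i'" by simp
              hence fk: "f i' \<le> f k" using assms unfolding good_def by simp
              show False
              proof (cases "k < n")
                case True
                hence "\<not> c < bt f n k" using kA[of k] by simp
                moreover have "bt f n k \<noteq> c" using cX True unfolding BX_def by auto
                ultimately have "bt f n k < c" by simp
                hence "f k \<le> j" unfolding bt_def j_def using True nck by linarith
                thus False using fk ji' by simp
              next
                case False
                hence "f k = 0" using assms unfolding good_def by simp
                thus False using fk ji' by simp
              qed
            qed
          qed
          thus ?thesis using good_K(1)[OF assms, of j] by (metis card_lessThan)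
        qed
        have ji: "j < f i" using Kj ik good_K(1)[OF assms, of j] by blast
        have ceq: "c = j + n - Kf f j"
          using Kj nck unfolding j_def by linarith
        have "(i, j) \<in> ?S"
          using ji Qh cell_facts(4)[OF assms ji] i(2) ceq by (simp add: cellsf_def)
        moreover have "q = \<phi> (i, j)" using bc i(2) ceq \<phi>_def by simp
        ultimately show "q \<in> \<phi> ` ?S" by blast
      qed
    qed
  qed
  have "(\<Prod>c\<in>?S. hookf f c) = (\<Prod>c\<in>?S. (\<lambda>q. fst q - snd q) (\<phi> c))"
  proof (rule prod.cong[OF refl])
    fix c assume "c \<in> ?S"
    show "hookf f c = (\<lambda>q. fst q - snd q) (\<phi> c)" using hk[OF \<open>c \<in> ?S\<close>] by simp
  qed
  also have "\<dots> = (\<Prod>q\<in>PX Q (BX f n). fst q - snd q)"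
    by (rule prod.reindex_bij_betw[OF bij])
  finally show ?thesis .
qed



definition shape :: "(nat \<Rightarrow> nat) \<Rightarrow> (nat \<Rightarrow> nat) \<Rightarrow> nat \<Rightarrow> nat \<Rightarrow> nat \<Rightarrow> bool" where
  "shape f g n r s \<longleftrightarrow> r \<le> s \<and> s < n \<and> (\<forall>i. i < r \<or> s < i \<longrightarrow> g i = f i) \<and>
     (\<forall>i. r \<le> i \<and> i < s \<longrightarrow> Suc (g i) = f (Suc i)) \<and> g s < f s"

lemma telescope0:
  assumes "r \<le> s" "\<And>i. r \<le> i \<Longrightarrow> i < s \<Longrightarrow> a (Suc i) \<le> (a i :: nat)"
  shows "(\<Sum>i\<in>{r..<s}. a i - a (Suc i)) = a r - a s \<and> a s \<le> a r"
  using assms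
proof (induction s)
  case 0 then show ?case by simp
next
  case (Suc s)
  show ?case
  proof (cases "r = Suc s")
    case True then show ?thesis by simp
  next
    case False
    hence rs: "r \<le> s" using Suc.prems(1) by simp
    have ih: "(\<Sum>i\<in>{r..<s}. a i - a (Suc i)) = a r - a s \<and> a s \<le> a r"
      using Suc.IH[OF rs] Suc.prems(2) by simp
    have "a (Suc s) \<le> a s" using Suc.prems(2)[of s] rs by simp
    thus ?thesis using ih rs by (simp add: sum.atLeastLessThan_Suc)
  qed
qed

lemma telescope:
  assumes "r \<le> s" "\<And>i. r \<le> i \<Longrightarrow> i < s \<Longrightarrow> a (Suc i) \<le> (a i :: nat)"
  shows "(\<Sum>i\<in>{r..<s}. a i - a (Suc i)) = a r - a s"
  using telescope0[of r s a] assms by simp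

lemma shape_le:
  assumes "good f n" "shape f g n r s"
  shows "g i \<le> f i"
proof -
  have sh: "r \<le> s" "s < n" "\<And>i. i < r \<or> s < i \<Longrightarrow> g i = f i"
     "\<And>i. r \<le> i \<Longrightarrow> i < s \<Longrightarrow> Suc (g i) = f (Suc i)" "g s < f s"
    using assms(2) unfolding shape_def by auto
  have fa: "\<And>i j. i \<le> j \<Longrightarrow> f j \<le> f i" using assms(1) unfolding good_def by auto
  show ?thesis
  proof (cases "i < r \<or> s < i")
    case True then show ?thesis using sh(3) by simp
  next
    case False
    show ?thesis
    proof (cases "i = s")
      case True then show ?thesis using sh(5) by simp
    next
      case False
      hence "r \<le> i" "i < s" using \<open>\<not> (i < r \<or> s < i)\<close> by auto
      thus ?thesis using sh(4)[of i] fa[of i "Suc i"] by simp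
    qed
  qed
qed

lemma shape_lt:
  assumes "good f n" "shape f g n r s" "r \<le> i" "i \<le> s"
  shows "g i < f i"
proof -
  have sh: "\<And>i. r \<le> i \<Longrightarrow> i < s \<Longrightarrow> Suc (g i) = f (Suc i)" "g s < f s"
    using assms(2) unfolding shape_def by auto
  have fa: "\<And>i j. i \<le> j \<Longrightarrow> f j \<le> f i" using assms(1) unfolding good_def by auto
  show ?thesis
  proof (cases "i = s")
    case True then show ?thesis using sh(2) by simp
  next
    case False
    thus ?thesis using sh(1)[of i] fa[of i "Suc i"] assms(3,4) by simp
  qed
qed

lemma card_cells_diff:
  assumes "good f n" "\<And>i. g i \<le> f i"
  shows "card (cellsf f - cellsf g) = (\<Sum>i<n. f i - g i)"
proof -
  have "cellsf f - cellsf g = Sigma {..<n} (\<lambda>i. {g i..<f i})"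
  proof (intro set_eqI iffI)
    fix x assume "x \<in> cellsf f - cellsf g"
    moreover obtain i j where x: "x = (i, j)" by fastforce
    ultimately have "j < f i" "\<not> j < g i" by (auto simp: cellsf_def)
    moreover have "i < n"
    proof (rule ccontr)
      assume "\<not> i < n" hence "f i = 0" using assms(1) unfolding good_def by simp
      thus False using \<open>j < f i\<close> by simp
    qed
    ultimately show "x \<in> Sigma {..<n} (\<lambda>i. {g i..<f i})" using x by simp
  next
    fix x assume "x \<in> Sigma {..<n} (\<lambda>i. {g i..<f i})"
    moreover obtain i j where x: "x = (i, j)" by fastforce
    ultimately show "x \<in> cellsf f - cellsf g" by (auto simp: cellsf_def)
  qed
  hence "card (cellsf f - cellsf g) = (\<Sum>i<n. card {g i..<f i})" by (simp add: card_SigmaI)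
  thus ?thesis by simp
qed

lemma bt_shape:
  assumes "good f n" "shape f g n r s" "r \<le> i" "i < s"
  shows "bt g n i = bt f n (Suc i)"
proof -
  have "Suc (g i) = f (Suc i)" "s < n" using assms(2-4) unfolding shape_def by auto
  thus ?thesis unfolding bt_def using assms(4) by simp
qed

lemma shape_card:
  assumes "good f n" "shape f g n r s"
  shows "card (cellsf f - cellsf g) = bt f n r - bt g n s"
proof -
  have sh: "r \<le> s" "s < n" "\<And>i. i < r \<or> s < i \<Longrightarrow> g i = f i"
    using assms(2) unfolding shape_def by auto
  have le: "\<And>i. g i \<le> f i" by (rule shape_le[OF assms])
  have "card (cellsf f - cellsf g) = (\<Sum>i<n. f i - g i)" by (rule card_cells_diff[OF assms(1) le])
  also have "\<dots> = (\<Sum>i\<in>{r..<Suc s}. f i - g i)"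
  proof (rule sum.mono_neutral_right)
    show "{r..<Suc s} \<subseteq> {..<n}" using sh by auto
    show "\<forall>i\<in>{..<n} - {r..<Suc s}. f i - g i = 0" using sh(3) by auto
  qed simp
  also have "\<dots> = (\<Sum>i\<in>{r..<s}. f i - g i) + (f s - g s)"
    using sh(1) by (simp add: sum.atLeastLessThan_Suc)
  also have "(\<Sum>i\<in>{r..<s}. f i - g i) = (\<Sum>i\<in>{r..<s}. bt f n i - bt f n (Suc i))"
  proof (rule sum.cong[OF refl])
    fix i assume i: "i \<in> {r..<s}"
    have "bt f n (Suc i) = bt g n i" using bt_shape[OF assms, of i] i by simp
    moreover have "i < n" using i sh by simp
    ultimately show "f i - g i = bt f n i - bt f n (Suc i)" using le[of i] unfolding bt_def by simp
  qed
  also have "\<dots> = bt f n r - bt f n s"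
  proof (rule telescope[OF sh(1)])
    fix i assume "r \<le> i" "i < s"
    thus "bt f n (Suc i) \<le> bt f n i" using bt_strict[OF assms(1), of i "Suc i"] sh(2) by simp
  qed
  also have "f s - g s = bt f n s - bt g n s" unfolding bt_def using sh(2) le[of s] by simp
  also have "bt f n r - bt f n s + (bt f n s - bt g n s) = bt f n r - bt g n s"
  proof -
    have "bt f n s \<le> bt f n r"
      using bt_strict[OF assms(1), of r s] sh by (cases "r = s") auto
    moreover have "bt g n s \<le> bt f n s" unfolding bt_def using le[of s] by simp
    ultimately show ?thesis by simp
  qed
  finally show ?thesis .
qed

lemma shape_BX:
  assumes "good f n" "good g n" "shape f g n r s"
  shows "BX g n = insert (bt g n s) (BX f n - {bt f n r})"
    "bt g n s \<notin> BX f n" "bt f n r \<in> BX f n"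
proof -
  have sh: "r \<le> s" "s < n" "\<And>i. i < r \<or> s < i \<Longrightarrow> g i = f i" "g s < f s"
    using assms(3) unfolding shape_def by auto
  have btout: "\<And>i. i < r \<or> s < i \<Longrightarrow> bt g n i = bt f n i" unfolding bt_def using sh(3) by simp
  have lt: "bt g n s < bt f n s" unfolding bt_def using sh(2,4) by simp
  have gt: "bt f n (Suc s) < bt g n s" if "Suc s < n"
  proof -
    have "g (Suc s) = f (Suc s)" using sh(3) by simp
    moreover have "g (Suc s) \<le> g s" using assms(2) unfolding good_def by simp
    ultimately show ?thesis unfolding bt_def using that by simp
  qed
  show nin: "bt g n s \<notin> BX f n"
  proof
    assume "bt g n s \<in> BX f n"
    then obtain k where k: "k < n" "bt g n s = bt f n k" unfolding BX_def by auto
    show False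
    proof (cases "k \<le> s")
      case True
      hence "bt f n s \<le> bt f n k" using bt_strict[OF assms(1), of k s] sh(2) by (cases "k = s") auto
      thus False using k lt by simp
    next
      case False
      hence "bt f n k \<le> bt f n (Suc s)" using bt_strict[OF assms(1), of "Suc s" k] k(1)
        by (cases "k = Suc s") auto
      moreover have "Suc s < n" using False k(1) by simp
      ultimately show False using k gt by simp
    qed
  qed
  show "bt f n r \<in> BX f n" unfolding BX_def using sh by auto
  have inj: "inj_on (bt f n) {..<n}"
  proof (rule inj_onI)
    fix x y assume "x \<in> {..<n}" "y \<in> {..<n}" "bt f n x = bt f n y"
    thus "x = y" using bt_strict[OF assms(1), of x y] bt_strict[OF assms(1), of y x]
      by (cases "x < y"; cases "y < x") auto
  qed
  have "BX g n = bt g n ` ({..<r} \<union> {r..<s} \<union> {s} \<union> {Suc s..<n})"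
    unfolding BX_def using sh(1,2) by (intro arg_cong[where f="image (bt g n)"]) auto
  also have "\<dots> = bt f n ` {..<r} \<union> bt f n ` {Suc r..<Suc s} \<union> {bt g n s} \<union> bt f n ` {Suc s..<n}"
  proof -
    have "bt g n ` {..<r} = bt f n ` {..<r}" using btout by (intro image_cong) auto
    moreover have "bt g n ` {Suc s..<n} = bt f n ` {Suc s..<n}" using btout by (intro image_cong) auto
    moreover have "bt g n ` {r..<s} = bt f n ` {Suc r..<Suc s}"
    proof -
      have "bt g n ` {r..<s} = (\<lambda>i. bt f n (Suc i)) ` {r..<s}"
        using bt_shape[OF assms(1,3)] by (intro image_cong) auto
      also have "\<dots> = bt f n ` (Suc ` {r..<s})" by (simp only: image_image)
      also have "Suc ` {r..<s} = {Suc r..<Suc s}" by (simp only: image_Suc_atLeastLessThan)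
      finally show ?thesis .
    qed
    ultimately show ?thesis by (simp add: image_Un)
  qed
  also have "\<dots> = insert (bt g n s) (bt f n ` ({..<n} - {r}))"
  proof -
    have "{..<n} - {r} = {..<r} \<union> {Suc r..<Suc s} \<union> {Suc s..<n}" using sh(1,2) by auto
    thus ?thesis by (auto simp: image_Un)
  qed
  also have "bt f n ` ({..<n} - {r}) = BX f n - {bt f n r}"
    unfolding BX_def using inj sh by (simp add: inj_on_image_set_diff)
  finally show "BX g n = insert (bt g n s) (BX f n - {bt f n r})" .
qed



abbreviation Rel :: "(nat \<times> nat) set \<Rightarrow> nat \<times> nat \<Rightarrow> nat \<times> nat \<Rightarrow> bool" where
  "Rel S \<equiv> (\<lambda>x y. x \<in> S \<and> y \<in> S \<and> adjacent x y)"

lemma adjacent_sym: "adjacent x y \<Longrightarrow> adjacent y x"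
  unfolding adjacent_def by (auto split: prod.splits)

lemma rtranclp_sym:
  assumes "\<And>x y. R x y \<Longrightarrow> R y x" "R\<^sup>*\<^sup>* x y"
  shows "R\<^sup>*\<^sup>* y x"
  using assms(2)
proof (induction rule: rtranclp_induct)
  case base then show ?case by simp
next
  case (step y z)
  have "R z y" using assms(1) step(2) by simp
  thus ?case using step(3) by (rule converse_rtranclp_into_rtranclp)
qed

lemma crossing:
  assumes "(Rel S)\<^sup>*\<^sup>* c d"
  shows "fst c \<le> i \<Longrightarrow> i < fst d \<Longrightarrow> \<exists>j. (i, j) \<in> S \<and> (Suc i, j) \<in> S"
  using assms
proof (induction arbitrary: i rule: rtranclp_induct)
  case base then show ?case by simp
next
  case (step y z)
  show ?case
  proof (cases "i < fst y")
    case True then show ?thesis using step by blast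
  next
    case False
    obtain a b a' b' where yz: "y = (a, b)" "z = (a', b')" by fastforce
    have adj: "adjacent (a, b) (a', b')" and inS: "(a, b) \<in> S" "(a', b') \<in> S"
      using step(2) yz by auto
    have ai: "a \<le> i" "i < a'" using False step.prems yz by auto
    have "b = b' \<and> a' = Suc a" using adj ai unfolding adjacent_def by auto
    hence "a = i" "a' = Suc i" "b' = b" using ai by auto
    thus ?thesis using inS by blast
  qed
qed

lemma memS: "(i, j) \<in> cellsf f - cellsf g \<longleftrightarrow> g i \<le> j \<and> j < f i"
  unfolding cellsf_def by auto

lemma extract_shape:
  assumes "good f n" "good g n" "\<And>i. g i \<le> f i"
    and conn: "cells_connected (cellsf f - cellsf g)" and no: "no_2x2 (cellsf f - cellsf g)"
  shows "\<exists>r s. shape f g n r s"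
proof -
  let ?S = "cellsf f - cellsf g"
  define R where "R = {i. g i < f i}"
  have fa: "\<And>i j. i \<le> j \<Longrightarrow> f j \<le> f i" using assms(1) unfolding good_def by auto
  have ga: "\<And>i j. i \<le> j \<Longrightarrow> g j \<le> g i" using assms(2) unfolding good_def by auto
  have Rn: "R \<subseteq> {..<n}"
  proof
    fix i assume "i \<in> R"
    hence "g i < f i" unfolding R_def by simp
    show "i \<in> {..<n}"
    proof (rule ccontr)
      assume "i \<notin> {..<n}"
      hence "f i = 0" using assms(1) unfolding good_def by simp
      thus False using \<open>g i < f i\<close> by simp
    qed
  qed
  have finR: "finite R" using Rn finite_subset by blast
  obtain c0 where "c0 \<in> ?S" using conn unfolding cells_connected_def by blast
  moreover obtain i0 j0 where "c0 = (i0, j0)" by fastforce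
  ultimately have "g i0 < f i0" using memS by (metis le_less_trans)
  hence Rne: "R \<noteq> {}" unfolding R_def by blast
  define r where "r = Min R"
  define s where "s = Max R"
  have rR: "r \<in> R" and sR: "s \<in> R" using finR Rne r_def s_def by auto
  have rs: "r \<le> s" using finR Rne r_def s_def by simp
  have sn: "s < n" using sR Rn by auto
  have out: "g i = f i" if "i < r \<or> s < i" for i
  proof -
    have "i \<notin> R" using that finR r_def s_def
      by (metis Max_ge Min_le leD)
    thus ?thesis using assms(3)[of i] unfolding R_def by simp
  qed
  have gs: "g s < f s" using sR unfolding R_def by simp
  have mid: "Suc (g i) = f (Suc i)" if ris: "r \<le> i" "i < s" for i
  proof -
    have "(r, g r) \<in> ?S" "(s, g s) \<in> ?S" using rR sR unfolding R_def by (auto simp: cellsf_def)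
    hence "(Rel ?S)\<^sup>*\<^sup>* (r, g r) (s, g s)" using conn unfolding cells_connected_def by blast
    then obtain j where j: "(i, j) \<in> ?S" "(Suc i, j) \<in> ?S"
      using crossing[of ?S "(r, g r)" "(s, g s)" i] ris by auto
    hence lt: "g i < f (Suc i)" by (auto simp: cellsf_def)
    show ?thesis
    proof (rule ccontr)
      assume "Suc (g i) \<noteq> f (Suc i)"
      hence lt2: "Suc (g i) < f (Suc i)" using lt by simp
      have "f (Suc i) \<le> f i" using fa by simp
      moreover have "g (Suc i) \<le> g i" using ga by simp
      ultimately have "(i, g i) \<in> ?S" "(Suc i, g i) \<in> ?S" "(i, Suc (g i)) \<in> ?S" "(Suc i, Suc (g i)) \<in> ?S"
        using lt2 by (auto simp: cellsf_def)
      thus False using no unfolding no_2x2_def by blast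
    qed
  qed
  have "shape f g n r s" unfolding shape_def using rs sn out mid gs by blast
  thus ?thesis by blast
qed

lemma shape_rows:
  assumes "shape f g n r s" "(i, j) \<in> cellsf f - cellsf g"
  shows "r \<le> i" "i \<le> s"
proof -
  have out: "\<And>i. i < r \<or> s < i \<Longrightarrow> g i = f i" using assms(1) unfolding shape_def by auto
  have "g i < f i" using assms(2) by (auto simp: cellsf_def)
  thus "r \<le> i" "i \<le> s" using out[of i] by (auto simp: not_le[symmetric])
qed

lemma shape_conn:
  assumes "good f n" "good g n" "shape f g n r s"
  shows "cells_connected (cellsf f - cellsf g)" "no_2x2 (cellsf f - cellsf g)"
proof -
  let ?S = "cellsf f - cellsf g"
  have sh: "r \<le> s" "s < n" "\<And>i. r \<le> i \<Longrightarrow> i < s \<Longrightarrow> Suc (g i) = f (Suc i)" "g s < f s"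
    using assms(3) unfolding shape_def by auto
  have fa: "\<And>i j. i \<le> j \<Longrightarrow> f j \<le> f i" using assms(1) unfolding good_def by auto
  have c1: "(Rel ?S)\<^sup>*\<^sup>* (i, j) (i, f i - 1)" if "(i, j) \<in> ?S" for i j
  proof -
    have "\<And>j. f i - 1 - j = k \<Longrightarrow> (i, j) \<in> ?S \<Longrightarrow> (Rel ?S)\<^sup>*\<^sup>* (i, j) (i, f i - 1)" for k
    proof (induction k)
      case 0
      hence "j = f i - 1" by (auto simp: cellsf_def)
      thus ?case by simp
    next
      case (Suc k)
      have j: "g i \<le> j" "j < f i" using Suc.prems(2) by (auto simp: cellsf_def)
      have "(i, Suc j) \<in> ?S" using Suc.prems(1) j by (auto simp: cellsf_def)
      moreover have "f i - 1 - Suc j = k" using Suc.prems(1) by simp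
      ultimately have "(Rel ?S)\<^sup>*\<^sup>* (i, Suc j) (i, f i - 1)" using Suc.IH by blast
      moreover have "Rel ?S (i, j) (i, Suc j)"
        using Suc.prems(2) \<open>(i, Suc j) \<in> ?S\<close> by (simp add: adjacent_def)
      ultimately show ?case by (rule converse_rtranclp_into_rtranclp[rotated])
    qed
    thus ?thesis using that by blast
  qed
  have c2: "r \<le> i \<longrightarrow> i \<le> s \<longrightarrow> (Rel ?S)\<^sup>*\<^sup>* (i, f i - 1) (r, f r - 1)" for i
  proof (induction i)
    case 0 then show ?case by simp
  next
    case (Suc i)
    show ?case
    proof (intro impI)
      assume a: "r \<le> Suc i" "Suc i \<le> s"
      show "(Rel ?S)\<^sup>*\<^sup>* (Suc i, f (Suc i) - 1) (r, f r - 1)"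
      proof (cases "r = Suc i")
        case True then show ?thesis by simp
      next
        case False
        hence ri: "r \<le> i" "i < s" using a by auto
        have e: "Suc (g i) = f (Suc i)" using sh(3) ri by simp
        have f1: "f (Suc i) \<le> f i" using fa by simp
        have in1: "(i, f (Suc i) - 1) \<in> ?S" using e f1 by (auto simp: cellsf_def)
        have in2: "(Suc i, f (Suc i) - 1) \<in> ?S"
          using shape_lt[OF assms(1,3), of "Suc i"] ri a e by (auto simp: cellsf_def)
        have "Rel ?S (Suc i, f (Suc i) - 1) (i, f (Suc i) - 1)"
          using in1 in2 by (simp add: adjacent_def)
        moreover have "(Rel ?S)\<^sup>*\<^sup>* (i, f (Suc i) - 1) (r, f r - 1)"
        proof (rule rtranclp_trans)
          show "(Rel ?S)\<^sup>*\<^sup>* (i, f (Suc i) - 1) (i, f i - 1)" by (rule c1[OF in1])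
          show "(Rel ?S)\<^sup>*\<^sup>* (i, f i - 1) (r, f r - 1)" using Suc.IH ri by simp
        qed
        ultimately show ?thesis by (rule converse_rtranclp_into_rtranclp)
      qed
    qed
  qed
  have base: "(Rel ?S)\<^sup>*\<^sup>* c (r, f r - 1)" if "c \<in> ?S" for c
  proof -
    obtain i j where c: "c = (i, j)" by fastforce
    have "r \<le> i" "i \<le> s" using shape_rows[OF assms(3)] that c by auto
    thus ?thesis using c1[of i j] c2[of i] that c by (meson rtranclp_trans)
  qed
  have symR: "\<And>x y. Rel ?S x y \<Longrightarrow> Rel ?S y x" using adjacent_sym by blast
  show "cells_connected ?S"
    unfolding cells_connected_def
  proof (intro conjI ballI)
    show "?S \<noteq> {}" using sh(4) memS[of s "g s" f g] by auto
    fix c d assume "c \<in> ?S" "d \<in> ?S"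
    have "(Rel ?S)\<^sup>*\<^sup>* c (r, f r - 1)" by (rule base[OF \<open>c \<in> ?S\<close>])
    moreover have "(Rel ?S)\<^sup>*\<^sup>* (r, f r - 1) d" by (rule rtranclp_sym[OF symR base[OF \<open>d \<in> ?S\<close>]])
    ultimately show "(Rel ?S)\<^sup>*\<^sup>* c d" by (rule rtranclp_trans)
  qed
  show "no_2x2 ?S"
    unfolding no_2x2_def
  proof
    assume "\<exists>i j. (i, j) \<in> ?S \<and> (Suc i, j) \<in> ?S \<and> (i, Suc j) \<in> ?S \<and> (Suc i, Suc j) \<in> ?S"
    then obtain i j where ij: "(i, j) \<in> ?S" "(Suc i, j) \<in> ?S" "(Suc i, Suc j) \<in> ?S" by blast
    have "r \<le> i" "Suc i \<le> s" using shape_rows[OF assms(3) ij(1)] shape_rows[OF assms(3) ij(2)] by auto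
    hence "Suc (g i) = f (Suc i)" using sh(3) by simp
    thus False using ij(1,3) by (auto simp: cellsf_def)
  qed
qed



lemma construct:
  assumes "good f n" "r < n" "0 < p" "p \<le> bt f n r" "bt f n r - p \<notin> BX f n"
  shows "\<exists>g s. good g n \<and> shape f g n r s \<and> bt g n s = bt f n r - p"
proof -
  define c where "c = bt f n r - p"
  have cX: "c \<notin> BX f n" using assms(5) c_def by simp
  have fa: "\<And>i j. i \<le> j \<Longrightarrow> f j \<le> f i" using assms(1) unfolding good_def by auto
  have fz: "\<And>i. n \<le> i \<Longrightarrow> f i = 0" using assms(1) unfolding good_def by auto
  define A where "A = {i. i < n \<and> c < bt f n i}"
  define K where "K = card A"
  have Aeq: "A = {..<K}" unfolding K_def
  proof (rule downclosed_eq)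
    show "finite A" unfolding A_def by simp
    fix x y assume "x \<in> A" "y < x"
    thus "y \<in> A" unfolding A_def using bt_strict[OF assms(1), of y x] by auto
  qed
  have kA: "\<And>i. (i < K) = (i < n \<and> c < bt f n i)" using Aeq unfolding A_def by blast
  have rK: "r < K" using kA[of r] assms(2-4) c_def by simp
  have Kn: "K \<le> n"
  proof (rule ccontr)
    assume "\<not> K \<le> n" hence "n < K" by simp
    thus False using kA[of n] by simp
  qed
  define s where "s = K - 1"
  have rs: "r \<le> s" and sn: "s < n" and sK: "Suc s = K" using rK Kn s_def by auto
  have cs: "c < bt f n s" using kA[of s] sK by simp
  have after: "bt f n (Suc s) < c" if "Suc s < n"
  proof -
    have "\<not> c < bt f n (Suc s)" using kA[of "Suc s"] sK that by simp
    moreover have "bt f n (Suc s) \<noteq> c" using cX that unfolding BX_def by auto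
    ultimately show ?thesis by simp
  qed
  have nc: "n \<le> c + Suc s"
  proof (cases "Suc s < n")
    case True
    thus ?thesis using after[OF True] unfolding bt_def by linarith
  next
    case False thus ?thesis by simp
  qed
  define g where "g i = (if r \<le> i \<and> i < s then f (Suc i) - 1 else if i = s then c + Suc s - n else f i)" for i
  have gs: "g s = c + Suc s - n" unfolding g_def by simp
  have gsf: "g s < f s" using gs cs sn nc unfolding bt_def by linarith
  have fs1: "1 \<le> f s" using gsf by simp
  have gmid: "g i = f (Suc i) - 1" "Suc (g i) = f (Suc i)" if "r \<le> i" "i < s" for i
  proof -
    show "g i = f (Suc i) - 1" unfolding g_def using that by simp
    have "f s \<le> f (Suc i)" using fa that by simp
    thus "Suc (g i) = f (Suc i)" unfolding g_def using that fs1 by simp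
  qed
  have gout: "g i = f i" if "i < r \<or> s < i" for i
    unfolding g_def using that rs by auto
  have sh: "shape f g n r s" unfolding shape_def using rs sn gout gmid(2) gsf by blast
  have step: "g (Suc i) \<le> g i" for i
  proof -
    consider (a) "Suc i < r" | (b) "Suc i = r" | (c) "r \<le> i \<and> Suc i < s" | (d) "r \<le> i \<and> Suc i = s"
      | (e) "i = s" | (f) "s < i" by linarith
    thus ?thesis
    proof cases
      case a thus ?thesis using gout[of i] gout[of "Suc i"] fa[of i "Suc i"] by simp
    next
      case b
      have gi: "g i = f i" using gout[of i] b by simp
      have "g r \<le> f r" using shape_le[OF assms(1) sh] .
      thus ?thesis using gi b fa[of i "Suc i"] by simp
    next
      case c
      thus ?thesis using gmid(1)[of i] gmid(1)[of "Suc i"] fa[of "Suc i" "Suc (Suc i)"] by simp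
    next
      case d
      thus ?thesis using gmid(1)[of i] gsf by simp
    next
      case e
      show ?thesis
      proof (cases "Suc s < n")
        case True
        have "g (Suc s) = f (Suc s)" using gout by simp
        hence "g (Suc s) \<le> g s" using gs after[OF True] True unfolding bt_def by linarith
        thus ?thesis using e by simp
      next
        case False
        have "g (Suc s) = f (Suc s)" using gout by simp
        moreover have "f (Suc s) = 0" using fz False by simp
        ultimately show ?thesis using e by simp
      qed
    next
      case f
      thus ?thesis using gout[of i] gout[of "Suc i"] fa[of i "Suc i"] by simp
    qed
  qed
  have good: "good g n" unfolding good_def
  proof (intro conjI allI impI)
    fix i j :: nat assume "i \<le> j"
    thus "g j \<le> g i" using lift_Suc_antimono_le[of g, OF step] by blast
  next
    fix i assume "n \<le> i"
    thus "g i = 0" using gout[of i] fz[of i] sn by simp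
  qed
  have "bt g n s = c" unfolding bt_def gs using nc by simp
  thus ?thesis using good sh c_def by blast
qed

lemma le_of_subset:
  assumes "cellsf g \<subseteq> cellsf f"
  shows "g i \<le> f i"
proof (rule ccontr)
  assume "\<not> g i \<le> f i"
  hence "(i, f i) \<in> cellsf g" unfolding cellsf_def by simp
  moreover have "(i, f i) \<notin> cellsf f" unfolding cellsf_def by simp
  ultimately show False using assms by blast
qed

lemma count_insert:
  fixes X :: "nat set"
  assumes "b \<in> X" "c \<notin> X" "c < b" "b - c = p" "finite X"
  shows "card {x\<in>insert c (X - {b}). x mod p = t} = card {x\<in>X. x mod p = t}"
proof -
  have cb: "c mod p = b mod p"
  proof -
    have "b = c + p" using assms(3,4) by simp
    thus ?thesis by simp
  qed
  show ?thesis
  proof (cases "b mod p = t")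
    case True
    have "{x\<in>insert c (X - {b}). x mod p = t} = insert c ({x\<in>X. x mod p = t} - {b})"
      using True cb by auto
    moreover have "c \<notin> {x\<in>X. x mod p = t} - {b}" using assms(2) by simp
    moreover have "b \<in> {x\<in>X. x mod p = t}" using assms(1) True by simp
    moreover have "finite {x\<in>X. x mod p = t}" using assms(5) by simp
    ultimately have "card {x\<in>insert c (X - {b}). x mod p = t} = Suc (card ({x\<in>X. x mod p = t} - {b}))"
      using card_insert_disjoint[OF finite_Diff[OF \<open>finite {x\<in>X. x mod p = t}\<close>] \<open>c \<notin> {x\<in>X. x mod p = t} - {b}\<close>]
      by simp
    also have "\<dots> = card {x\<in>X. x mod p = t}"
      using card_Suc_Diff1[OF \<open>finite {x\<in>X. x mod p = t}\<close> \<open>b \<in> {x\<in>X. x mod p = t}\<close>] .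
    finally show ?thesis .
  next
    case False
    have "{x\<in>insert c (X - {b}). x mod p = t} = {x\<in>X. x mod p = t}"
      using False cb assms(1) by auto
    thus ?thesis by simp
  qed
qed

lemma strip_step:
  assumes "good f n" "good g n" "cellsf g \<subseteq> cellsf f" "card (cellsf f - cellsf g) = p" "0 < p"
    "cells_connected (cellsf f - cellsf g)" "no_2x2 (cellsf f - cellsf g)"
  shows "card {x\<in>BX g n. x mod p = t} = card {x\<in>BX f n. x mod p = t}"
proof -
  have le: "\<And>i. g i \<le> f i" using le_of_subset[OF assms(3)] .
  obtain r s where sh: "shape f g n r s" using extract_shape[OF assms(1,2) le assms(6,7)] by blast
  have pc: "p = bt f n r - bt g n s" using shape_card[OF assms(1) sh] assms(4) by simp
  have bx: "BX g n = insert (bt g n s) (BX f n - {bt f n r})" "bt g n s \<notin> BX f n" "bt f n r \<in> BX f n"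
    using shape_BX[OF assms(1,2) sh] by auto
  have lt: "bt g n s < bt f n r" using pc assms(5) by simp
  show ?thesis unfolding bx(1)
    by (rule count_insert[OF bx(3) bx(2) lt pc[symmetric]]) (simp add: BX_def)
qed

lemma list_of:
  assumes "good g n"
  shows "\<exists>l. is_partition l \<and> pt l = g \<and> length l \<le> n"
proof -
  define K where "K = Kf g 0"
  have kk: "\<And>i. (0 < g i) = (i < K)" using good_K(1)[OF assms, of 0] K_def by blast
  have Kn: "K \<le> n" using good_K(2)[OF assms, of 0] K_def by simp
  have ga: "\<And>i j. i \<le> j \<Longrightarrow> g j \<le> g i" using assms unfolding good_def by auto
  define l where "l = map g [0..<K]"
  have len: "length l = K" unfolding l_def by simp
  have nth: "\<And>i. i < K \<Longrightarrow> l ! i = g i" unfolding l_def by simp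
  have "is_partition l" unfolding is_partition_def
  proof
    show "sorted_wrt (\<ge>) l" unfolding sorted_wrt_iff_nth_less
    proof (intro allI impI)
      fix i j assume a: "i < j" "j < length l"
      hence "l ! i = g i" "l ! j = g j" using nth len by auto
      moreover have "g j \<le> g i" using ga a by simp
      ultimately show "l ! j \<le> l ! i" by simp
    qed
    show "\<forall>x\<in>set l. 0 < x"
    proof
      fix x assume "x \<in> set l"
      then obtain i where "i < K" "x = g i" unfolding l_def by auto
      thus "0 < x" using kk by simp
    qed
  qed
  moreover have "pt l = g"
  proof
    fix i show "pt l i = g i"
    proof (cases "i < K")
      case True thus ?thesis unfolding pt_def using nth len by simp
    next
      case False
      hence "\<not> 0 < g i" using kk by simp
      thus ?thesis using False len unfolding pt_def by simp
    qed
  qed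
  moreover have "length l \<le> n" using len Kn by simp
  ultimately show ?thesis by blast
qed

lemma strip_length:
  assumes "remove_strip p la mu"
  shows "length mu \<le> length la"
proof (rule ccontr)
  assume "\<not> length mu \<le> length la"
  hence i: "length la < length mu" by simp
  have "0 < mu ! length la" using assms i unfolding remove_strip_def is_partition_def by auto
  hence "(length la, 0) \<in> cells mu" using i unfolding cells_def by simp
  hence "(length la, 0) \<in> cells la" using assms unfolding remove_strip_def by blast
  thus False unfolding cells_def by simp
qed

lemma chain:
  assumes "(remove_strip p)\<^sup>*\<^sup>* la mu" "is_partition la" "length la \<le> n" "0 < p"
  shows "is_partition mu \<and> length mu \<le> n \<and>
    (\<forall>t. card {x\<in>BX (pt mu) n. x mod p = t} = card {x\<in>BX (pt la) n. x mod p = t})"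
  using assms(1)
proof (induction rule: rtranclp_induct)
  case base then show ?case using assms(2,3) by simp
next
  case (step y z)
  have y: "is_partition y" "length y \<le> n" and cy: "\<And>t. card {x\<in>BX (pt y) n. x mod p = t} = card {x\<in>BX (pt la) n. x mod p = t}"
    using step.IH by auto
  have rs: "is_partition z" "cells z \<subseteq> cells y" "card (cells y - cells z) = p"
      "cells_connected (cells y - cells z)" "no_2x2 (cells y - cells z)"
    using step.hyps(2) unfolding remove_strip_def by auto
  have lz: "length z \<le> n" using strip_length[OF step.hyps(2)] y(2) by simp
  have gy: "good (pt y) n" using good_mono[OF good_pt[OF y(1)] y(2)] .
  have gz: "good (pt z) n" using good_mono[OF good_pt[OF rs(1)] lz] .
  have "card {x\<in>BX (pt z) n. x mod p = t} = card {x\<in>BX (pt y) n. x mod p = t}" for t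
    by (rule strip_step[OF gy gz]) (use rs assms(4) in \<open>simp_all add: cells_pt\<close>)
  thus ?case using rs(1) lz cy by simp
qed

lemma core_dclosed:
  assumes "is_partition mu" "length mu \<le> n" "0 < p" "\<not> (\<exists>nu. remove_strip p mu nu)"
  shows "dclosed p (BX (pt mu) n)"
  unfolding dclosed_def
proof (intro ballI impI, rule ccontr)
  fix y assume y: "y \<in> BX (pt mu) n" "p \<le> y" "y - p \<notin> BX (pt mu) n"
  let ?f = "pt mu"
  have gf: "good ?f n" using good_mono[OF good_pt[OF assms(1)] assms(2)] .
  obtain r where r: "r < n" "y = bt ?f n r" using y(1) unfolding BX_def by auto
  obtain g s where gs: "good g n" "shape ?f g n r s" "bt g n s = bt ?f n r - p"
    using construct[OF gf r(1) assms(3)] y r by blast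
  obtain l where l: "is_partition l" "pt l = g" "length l \<le> n" using list_of[OF gs(1)] by blast
  have "remove_strip p mu l" unfolding remove_strip_def cells_pt l(2)
  proof (intro conjI)
    show "is_partition l" by (rule l(1))
    show "cellsf g \<subseteq> cellsf ?f" using shape_le[OF gf gs(2)] unfolding cellsf_def by (auto intro: less_le_trans)
    show "card (cellsf ?f - cellsf g) = p" using shape_card[OF gf gs(2)] gs(3) y(2) r(2) by simp
    show "cells_connected (cellsf ?f - cellsf g)" by (rule shape_conn(1)[OF gf gs(1,2)])
    show "no_2x2 (cellsf ?f - cellsf g)" by (rule shape_conn(2)[OF gf gs(1,2)])
  qed
  thus False using assms(4) by blast
qed



theorem corollary7p3:
  fixes p :: nat and la mu :: "nat list"
  assumes "p \<ge> 2" and "is_partition la" and "is_p_core p la mu"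
  shows "hook_prod mu dvd hook_prod_non_pfold p la"
proof -
  define n where "n = length la"
  have p0: "0 < p" using assms(1) by simp
  have ch: "(remove_strip p)\<^sup>*\<^sup>* la mu" and nc: "\<not> (\<exists>nu. remove_strip p mu nu)"
    using assms(3) unfolding is_p_core_def by auto
  have C: "is_partition mu \<and> length mu \<le> n \<and>
    (\<forall>t. card {x\<in>BX (pt mu) n. x mod p = t} = card {x\<in>BX (pt la) n. x mod p = t})"
    using chain[OF ch assms(2) _ p0, of n] n_def by simp
  define f where "f = pt la"
  define g where "g = pt mu"
  have gf: "good f n" using good_pt[OF assms(2)] f_def n_def by simp
  have gg: "good g n" using good_mono[OF good_pt] C g_def by blast
  define X where "X = BX f n"
  define Y where "Y = BX g n"
  have finX: "finite X" and finY: "finite Y" unfolding X_def Y_def BX_def by simp_all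
  define M where "M = Max (X \<union> Y)"
  have MX: "\<forall>z\<in>X. z \<le> M" and MY: "\<forall>z\<in>Y. z \<le> M" unfolding M_def using finX finY by auto
  have dY: "dclosed p Y" unfolding Y_def g_def using core_dclosed[OF _ _ p0 nc] C by blast
  have cnt: "\<And>s. card {x\<in>X. x mod p = s} = card {y\<in>Y. y mod p = s}"
    using C unfolding X_def Y_def f_def g_def by simp
  have mle: "\<And>h. mult Y h \<le> mult X h" by (rule mult_mono[OF finX finY p0 dY cnt])
  have e1: "hook_prod_non_pfold p la = (\<Prod>h\<in>{h. 0 < h \<and> h \<le> M \<and> \<not> p dvd h}. h ^ mult X h)"
  proof -
    have "hook_prod_non_pfold p la = (\<Prod>c\<in>{c \<in> cellsf f. (\<lambda>h. \<not> p dvd h) (hookf f c)}. hookf f c)"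
      unfolding hook_prod_non_pfold_def cells_pt hook_pt f_def by simp
    also have "\<dots> = (\<Prod>q\<in>PX (\<lambda>h. \<not> p dvd h) X. fst q - snd q)"
      unfolding X_def by (rule hook_bij[OF gf])
    also have "\<dots> = (\<Prod>h\<in>{h. 0 < h \<and> h \<le> M \<and> (\<lambda>h. \<not> p dvd h) h}. h ^ mult X h)"
      by (rule prod_PX[OF finX MX])
    finally show ?thesis by simp
  qed
  have e2: "hook_prod mu = (\<Prod>h\<in>{h. 0 < h \<and> h \<le> M \<and> (\<lambda>h. True) h}. h ^ mult Y h)"
  proof -
    have "hook_prod mu = (\<Prod>c\<in>{c \<in> cellsf g. (\<lambda>h. True) (hookf g c)}. hookf g c)"
      unfolding hook_prod_def cells_pt hook_pt g_def by simp
    also have "\<dots> = (\<Prod>q\<in>PX (\<lambda>h. True) Y. fst q - snd q)"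
      unfolding Y_def by (rule hook_bij[OF gg])
    also have "\<dots> = (\<Prod>h\<in>{h. 0 < h \<and> h \<le> M \<and> (\<lambda>h. True) h}. h ^ mult Y h)"
      by (rule prod_PX[OF finY MY])
    finally show ?thesis .
  qed
  have e3: "(\<Prod>h\<in>{h. 0 < h \<and> h \<le> M \<and> (\<lambda>h. True) h}. h ^ mult Y h) =
      (\<Prod>h\<in>{h. 0 < h \<and> h \<le> M \<and> \<not> p dvd h}. h ^ mult Y h)"
  proof (rule prod.mono_neutral_right)
    show "finite {h. 0 < h \<and> h \<le> M \<and> (\<lambda>h. True) h}" by (rule finite_subset[of _ "{..M}"]) auto
    show "{h. 0 < h \<and> h \<le> M \<and> \<not> p dvd h} \<subseteq> {h. 0 < h \<and> h \<le> M \<and> (\<lambda>h. True) h}" by auto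
    show "\<forall>i\<in>{h. 0 < h \<and> h \<le> M \<and> (\<lambda>h. True) h} - {h. 0 < h \<and> h \<le> M \<and> \<not> p dvd h}. i ^ mult Y i = 1"
    proof
      fix i assume "i \<in> {h. 0 < h \<and> h \<le> M \<and> (\<lambda>h. True) h} - {h. 0 < h \<and> h \<le> M \<and> \<not> p dvd h}"
      hence "p dvd i" by auto
      hence "mult Y i = 0" by (rule mult_dvd_zero[OF dY])
      thus "i ^ mult Y i = 1" by simp
    qed
  qed
  have "(\<Prod>h\<in>{h. 0 < h \<and> h \<le> M \<and> \<not> p dvd h}. h ^ mult Y h) dvd
      (\<Prod>h\<in>{h. 0 < h \<and> h \<le> M \<and> \<not> p dvd h}. h ^ mult X h)"
    by (rule prod_dvd_prod) (rule le_imp_power_dvd[OF mle])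
  thus ?thesis using e1 e2 e3 by simp
qed

end
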